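(* Let $X$ be a metric space and $\tau\in\mathrm{Fin}\,\mathbb N\cup\{\emptyset\}$ such that $\operatorname{Ord}A(X)^\tau=\alpha$ for some ordinal number $\alpha$. Then for each ordinal $\xi\le\alpha$ there exists $\sigma\in\mathrm{Fin}\,\mathbb N\cup\{\emptyset\}$ such that $\operatorname{Ord}A(X)^{\tau\cup\sigma}=\xi$.
   Context: A family $\mathcal A$ of subsets of a metric space is uniformly bounded if there is $C>0$ with $\operatorname{diam}A\le C$ for all $A\in\mathcal A$; it is $r$-disjoint if $d(A_1,A_2)\ge r$ for all distinct $A_1,A_2\in\mathcal A$. For a set $L$, $\mathrm{Fin}\,L$ is the collection of finite nonempty subsets of $L$. For $M\subset \mathrm{Fin}\,L$ and $\sigma\in\{\emptyset\}\cup\mathrm{Fin}\,L$, $M^\sigma=\{\tau\in\mathrm{Fin}\,L:\sigma\cup\tau\in M,\ \sigma\cap\tau=\emptyset\}$, and $M^a=M^{\{a\}}$. The ordinal $\operatorname{Ord}M$: $\operatorname{Ord}M=0$ iff $M=\emptyset$; $\operatorname{Ord}M\le\alpha$ iff $\operatorname{Ord}M^a<\alpha$ for every $a\in L$; $\operatorname{Ord}M=\alpha$ iff $\operatorname{Ord}M\le\alpha$ and not $\operatorname{Ord}M<\alpha$; $\operatorname{Ord}M=\infty$ iff $\operatorname{Ord} M\le\alpha$ for no ordinal $\alpha$. For a metric space $X$, $A(X)$ is the set of $\sigma\in\mathrm{Fin}\,\mathbb N$ such that there do NOT exist uniformly bounded families $\mathcal V_i$, $i\in\sigma$, with $\bigcup_{i\in\sigma}\mathcal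 V_i$ covering $X$ and each $\mathcal V_i$ being $i$-disjoint; here $L=\mathbb N$. *)

theory Defs
  imports "HOL-Analysis.Analysis"
begin

definition unif_bounded :: "('a \<Rightarrow> 'a \<Rightarrow> real) \<Rightarrow> 'a set set \<Rightarrow> bool" where
  "unif_bounded d \<V> \<longleftrightarrow> (\<exists>C>0. \<forall>A\<in>\<V>. \<forall>x\<in>A. \<forall>y\<in>A. d x y \<le> C)"

definition r_disjoint :: "('a \<Rightarrow> 'a \<Rightarrow> real) \<Rightarrow> real \<Rightarrow> 'a set set \<Rightarrow> bool" where
  "r_disjoint d r \<V> \<longleftrightarrow>
     (\<forall>A1\<in>\<V>. \<forall>A2\<in>\<V>. A1 \<noteq> A2 \<longrightarrow> (\<forall>x\<in>A1. \<forall>y\<in>A2. r \<le> d x y))"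

definition Fin :: "'b set \<Rightarrow> 'b set set" where
  "Fin L = {\<sigma>. finite \<sigma> \<and> \<sigma> \<noteq> {} \<and> \<sigma> \<subseteq> L}"

definition restr :: "'b set \<Rightarrow> 'b set set \<Rightarrow> 'b set \<Rightarrow> 'b set set" where
  "restr L M \<sigma> = {\<tau> \<in> Fin L. \<sigma> \<union> \<tau> \<in> M \<and> \<sigma> \<inter> \<tau> = {}}"

text \<open>ord_le L M \<alpha> means Ord M \<le> \<alpha>, where ordinals are represented by elements of
  an arbitrary well-ordered type.\<close>

inductive ord_le :: "'b set \<Rightarrow> 'b set set \<Rightarrow> 'o::wellorder \<Rightarrow> bool" for L where
  empty: "M = {} \<Longrightarrow> ord_le L M \<alpha>"
| step: "(\<forall>a\<in>L. \<exists>\<beta><\<alpha>. ord_le L (restr L M {a}) \<beta>) \<Longrightarrow> ord_le L M \<alpha>"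

definition ord_eq :: "'b set \<Rightarrow> 'b set set \<Rightarrow> 'o::wellorder \<Rightarrow> bool" where
  "ord_eq L M \<alpha> \<longleftrightarrow> ord_le L M \<alpha> \<and> \<not> (\<exists>\<beta><\<alpha>. ord_le L M \<beta>)"

definition Nat1 :: "nat set" where "Nat1 = {1..}"

definition AX :: "'a set \<Rightarrow> ('a \<Rightarrow> 'a \<Rightarrow> real) \<Rightarrow> nat set set" where
  "AX X d = {\<sigma> \<in> Fin Nat1. \<not> (\<exists>\<V> :: nat \<Rightarrow> 'a set set.
       (\<forall>i\<in>\<sigma>. \<V> i \<subseteq> Pow X \<and> unif_bounded d (\<V> i) \<and> r_disjoint d (real i) (\<V> i))
       \<and> X \<subseteq> (\<Union>i\<in>\<sigma>. \<Union>(\<V> i)))}"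

end

theory Submission
  imports Defs
begin

lemma ord_le_mono: "ord_le L M \<alpha> \<Longrightarrow> \<alpha> \<le> \<alpha>' \<Longrightarrow> ord_le L M \<alpha>'"
proof (induction arbitrary: \<alpha>' rule: ord_le.induct)
  case (empty M \<alpha>) then show ?case by (simp add: ord_le.empty)
next
  case (step M \<alpha>)
  then show ?case by (meson ord_le.step less_le_trans)
qed

lemma restr_step:
  assumes "a \<in> L" "a \<notin> \<tau>"
  shows "restr L (restr L M \<tau>) {a} = restr L M (\<tau> \<union> {a})"
  using assms unfolding restr_def Fin_def by auto

lemma main:
  fixes M :: "nat set set" and \<alpha> :: "'o::wellorder"
  shows "\<forall>\<tau>. (\<tau> = {} \<or> \<tau> \<in> Fin Nat1) \<longrightarrow> ord_eq Nat1 (restr Nat1 M \<tau>) \<alpha> \<longrightarrow>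
     (\<forall>\<xi>\<le>\<alpha>. \<exists>\<sigma>. (\<sigma> = {} \<or> \<sigma> \<in> Fin Nat1) \<and> ord_eq Nat1 (restr Nat1 M (\<tau> \<union> \<sigma>)) \<xi>)"
proof (induction \<alpha> rule: less_induct)
  case (less \<alpha>)
  show ?case
  proof (intro allI impI)
    fix \<tau> :: "nat set" and \<xi> :: 'o
    assume t: "\<tau> = {} \<or> \<tau> \<in> Fin Nat1" and oe: "ord_eq Nat1 (restr Nat1 M \<tau>) \<alpha>" and x: "\<xi> \<le> \<alpha>"
    let ?M = "restr Nat1 M \<tau>"
    show "\<exists>\<sigma>. (\<sigma> = {} \<or> \<sigma> \<in> Fin Nat1) \<and> ord_eq Nat1 (restr Nat1 M (\<tau> \<union> \<sigma>)) \<xi>"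
    proof (cases "\<xi> = \<alpha>")
      case True then show ?thesis using oe by (intro exI[of _ "{}"]) simp
    next
      case False
      with x have xa: "\<xi> < \<alpha>" by simp
      have ole: "ord_le Nat1 ?M \<alpha>" and nle: "\<not> ord_le Nat1 ?M \<xi>"
        using oe xa unfolding ord_eq_def by auto
      have Mne: "?M \<noteq> {}" using nle ord_le.empty by blast
      have all: "\<forall>a\<in>Nat1. \<exists>\<beta><\<alpha>. ord_le Nat1 (restr Nat1 ?M {a}) \<beta>"
        using ole
      proof (cases rule: ord_le.cases)
        case empty then show ?thesis using Mne by simp
      next
        case step then show ?thesis by simp
      qed
      have tfin: "finite \<tau>" "\<tau> \<subseteq> Nat1" using t unfolding Fin_def by auto
      have infN: "infinite Nat1" unfolding Nat1_def by (rule infinite_Ici)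
      obtain a where a: "a \<in> Nat1" "a \<notin> \<tau>" "\<forall>\<beta><\<xi>. \<not> ord_le Nat1 (restr Nat1 ?M {a}) \<beta>"
      proof (cases "\<exists>\<beta>. \<beta> < \<xi>")
        case True
        have "\<not> (\<forall>a\<in>Nat1. \<exists>\<beta><\<xi>. ord_le Nat1 (restr Nat1 ?M {a}) \<beta>)"
          using nle ord_le.step[where L=Nat1 and M="?M" and \<alpha>=\<xi>] by blast
        then obtain a where a: "a \<in> Nat1" "\<forall>\<beta><\<xi>. \<not> ord_le Nat1 (restr Nat1 ?M {a}) \<beta>"
          by blast
        have "a \<notin> \<tau>"
        proof
          assume "a \<in> \<tau>"
          then have "restr Nat1 ?M {a} = {}" unfolding restr_def by auto
          then have "\<forall>\<beta>. ord_le Nat1 (restr Nat1 ?M {a}) \<beta>" by (simp add: ord_le.empty)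
          then show False using a(2) True by blast
        qed
        then show ?thesis using that a by blast
      next
        case False
        obtain a where "a \<in> Nat1" "a \<notin> \<tau>"
        proof -
          have "infinite (Nat1 - \<tau>)" using infN tfin(1) by (rule Diff_infinite_finite[rotated])
          then obtain a where "a \<in> Nat1 - \<tau>" using infinite_imp_nonempty by blast
          then show ?thesis using that by blast
        qed
        then show ?thesis using that False by blast
      qed
      from all a(1) have ex: "\<exists>\<beta>. \<beta> < \<alpha> \<and> ord_le Nat1 (restr Nat1 ?M {a}) \<beta>" by blast
      define b :: 'o where "b = (LEAST \<beta>::'o. ord_le Nat1 (restr Nat1 ?M {a}) \<beta>)"
      have bl: "ord_le Nat1 (restr Nat1 ?M {a}) b" unfolding b_def
      proof -
        from ex obtain \<beta> :: 'o where "ord_le Nat1 (restr Nat1 ?M {a}) \<beta>" by blast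
        then show "ord_le Nat1 (restr Nat1 ?M {a}) (LEAST \<beta>::'o. ord_le Nat1 (restr Nat1 ?M {a}) \<beta>)"
          by (rule LeastI)
      qed
      have bmin: "\<not> (\<exists>\<beta><b. ord_le Nat1 (restr Nat1 ?M {a}) \<beta>)"
      proof
        assume "\<exists>\<beta><b. ord_le Nat1 (restr Nat1 ?M {a}) \<beta>"
        then obtain \<beta> where "\<beta> < b" "ord_le Nat1 (restr Nat1 ?M {a}) \<beta>" by blast
        from this(1) have "\<not> ord_le Nat1 (restr Nat1 ?M {a}) \<beta>" unfolding b_def by (rule not_less_Least)
        then show False using \<open>ord_le Nat1 (restr Nat1 ?M {a}) \<beta>\<close> by contradiction
      qed
      have ba: "b < \<alpha>"
      proof -
        from ex obtain \<beta> where "\<beta> < \<alpha>" "ord_le Nat1 (restr Nat1 ?M {a}) \<beta>" by blast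
        moreover from this(2) have "b \<le> \<beta>" unfolding b_def by (rule Least_le)
        ultimately show ?thesis by simp
      qed
      have xb: "\<xi> \<le> b"
      proof (rule ccontr)
        assume "\<not> \<xi> \<le> b"
        then have "b < \<xi>" by simp
        then show False using a(3) bl by blast
      qed
      have eqr: "restr Nat1 ?M {a} = restr Nat1 M (\<tau> \<union> {a})" by (rule restr_step[OF a(1,2)])
      have oeb: "ord_eq Nat1 (restr Nat1 M (\<tau> \<union> {a})) b"
        using bl bmin unfolding ord_eq_def eqr by simp
      have t2: "\<tau> \<union> {a} \<in> Fin Nat1" using tfin a unfolding Fin_def by auto
      have "\<exists>\<sigma>. (\<sigma> = {} \<or> \<sigma> \<in> Fin Nat1) \<and> ord_eq Nat1 (restr Nat1 M (\<tau> \<union> {a} \<union> \<sigma>)) \<xi>"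
        using less[OF ba, rule_format, OF _ oeb xb] t2 by simp
      then obtain \<sigma> where
        s: "\<sigma> = {} \<or> \<sigma> \<in> Fin Nat1" "ord_eq Nat1 (restr Nat1 M (\<tau> \<union> {a} \<union> \<sigma>)) \<xi>" by blast
      have "{a} \<union> \<sigma> \<in> Fin Nat1" using s(1) a unfolding Fin_def by auto
      moreover have "\<tau> \<union> {a} \<union> \<sigma> = \<tau> \<union> ({a} \<union> \<sigma>)" by auto
      ultimately show ?thesis using s(2) by (intro exI[of _ "{a} \<union> \<sigma>"]) simp
    qed
  qed
qed

theorem lemma5:
  fixes X :: "'a set" and d :: "'a \<Rightarrow> 'a \<Rightarrow> real"
    and \<tau> :: "nat set" and \<alpha> :: "'o::wellorder"
  assumes "Metric_space X d"
    and "\<tau> = {} \<or> \<tau> \<in> Fin Nat1"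
    and "ord_eq Nat1 (restr Nat1 (AX X d) \<tau>) \<alpha>"
  shows "\<forall>\<xi>\<le>\<alpha>. \<exists>\<sigma>. (\<sigma> = {} \<or> \<sigma> \<in> Fin Nat1) \<and>
           ord_eq Nat1 (restr Nat1 (AX X d) (\<tau> \<union> \<sigma>)) \<xi>"
  using main assms(2,3) by blast

end
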